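(* Let $X$ be a compact metric countable space and $f:X\to X$ a continuous function such that every accumulation point of $X$ is periodic. Let $p\in\mathbb N^*$ and let $b\in X$ be an isolated point. If there is a sequence $(a_n)_{n\in\mathbb N}$ in $X$ such that $f^p(a_n)\to b$, then $b$ is periodic and $\mathcal O_f(b)=\omega_f(b)=\omega_f(a_n)$ for all but finitely many $n\in\mathbb N$.
   Context: $\mathbb N^*$ denotes the set of free ultrafilters on $\mathbb N$. For $p\in\mathbb N^*$ and a sequence $(x_n)$ in $X$, $x=p\text{-}\lim_{n\to\infty}x_n$ means that for every neighborhood $V$ of $x$, $\{n\in\mathbb N: x_n\in V\}\in p$. The $p$-iterate of $f$ is $f^p(x)=p\text{-}\lim_{n\to\infty}f^n(x)$. The orbit of $x$ is $\mathcal O_f(x)=\{f^n(x):n\in\mathbb N\}$. The $\omega$-limit set $\omega_f(x)$ is the set of $y\in X$ such that $f^{n_k}(x)\to y$ for some strictly increasing sequence $(n_k)$ of naturals. A point $x$ is periodic if $f^n(x)=x$ for some $n\ge 1$. An accumulation point of $X$ is a non-isolated point. *)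

theory Defs
  imports "HOL-Analysis.Analysis"
begin

definition free_ultrafilter :: "nat set set \<Rightarrow> bool" where
  "free_ultrafilter p \<longleftrightarrow>
     {} \<notin> p \<and>
     (\<forall>A B. A \<in> p \<and> A \<subseteq> B \<longrightarrow> B \<in> p) \<and>
     (\<forall>A B. A \<in> p \<and> B \<in> p \<longrightarrow> A \<inter> B \<in> p) \<and>
     (\<forall>A. A \<in> p \<or> - A \<in> p) \<and>
     (\<forall>A. finite A \<longrightarrow> A \<notin> p)"

text \<open>y is the p-limit of the sequence x (neighbourhoods in the subspace X are traces of
  open sets, so it suffices to quantify over open sets of the ambient space).\<close>
definition plim :: "nat set set \<Rightarrow> (nat \<Rightarrow> 'a::topological_space) \<Rightarrow> 'a \<Rightarrow> bool" where
  "plim p x y \<longleftrightarrow> (\<forall>V. open V \<and> y \<in> V \<longrightarrow> {n. x n \<in> V} \<in> p)"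

definition p_iterate :: "'a::topological_space set \<Rightarrow> nat set set \<Rightarrow> ('a \<Rightarrow> 'a) \<Rightarrow> 'a \<Rightarrow> 'a" where
  "p_iterate X p f x = (THE y. y \<in> X \<and> plim p (\<lambda>n. (f ^^ n) x) y)"

definition orbit :: "('a \<Rightarrow> 'a) \<Rightarrow> 'a \<Rightarrow> 'a set" where
  "orbit f x = {(f ^^ n) x | n. True}"

definition omega_limit :: "('a \<Rightarrow> 'a) \<Rightarrow> 'a::topological_space \<Rightarrow> 'a set" where
  "omega_limit f x = {y. \<exists>r. strict_mono r \<and> (\<lambda>k. (f ^^ (r k)) x) \<longlonglongrightarrow> y}"

definition periodic_point :: "('a \<Rightarrow> 'a) \<Rightarrow> 'a \<Rightarrow> bool" where
  "periodic_point f x \<longleftrightarrow> (\<exists>n\<ge>1. (f ^^ n) x = x)"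

end

theory Submission
  imports Defs
begin

lemma fu_UNIV: "free_ultrafilter p \<Longrightarrow> UNIV \<in> p"
  unfolding free_ultrafilter_def by (metis Compl_empty_eq)

lemma fu_union_notin:
  assumes "free_ultrafilter p" "A \<notin> p" "B \<notin> p" shows "A \<union> B \<notin> p"
proof
  assume h: "A \<union> B \<in> p"
  have "-A \<in> p" "-B \<in> p" using assms unfolding free_ultrafilter_def by blast+
  then have "-A \<inter> -B \<in> p" using assms(1) unfolding free_ultrafilter_def by blast
  then have "(A \<union> B) \<inter> (-A \<inter> -B) \<in> p" using h assms(1) unfolding free_ultrafilter_def by blast
  moreover have "(A \<union> B) \<inter> (-A \<inter> -B) = {}" by blast
  ultimately show False using assms(1) unfolding free_ultrafilter_def by simp
qed

lemma fu_finite_union_notin: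
  assumes "free_ultrafilter p" "finite F" "\<forall>y\<in>F. {n. x n \<in> V y} \<notin> p"
  shows "{n. x n \<in> (\<Union>y\<in>F. V y)} \<notin> p"
  using assms(2,3)
proof (induction F rule: finite_induct)
  case empty
  then show ?case using assms(1) unfolding free_ultrafilter_def by simp
next
  case (insert y F)
  have "{n. x n \<in> (\<Union>y\<in>insert y F. V y)} = {n. x n \<in> V y} \<union> {n. x n \<in> (\<Union>y\<in>F. V y)}"
    by auto
  then show ?case using insert fu_union_notin[OF assms(1)] by simp
qed

lemma plim_ex1:
  fixes X :: "'a::metric_space set"
  assumes "compact X" "\<And>k. x k \<in> X" "free_ultrafilter p"
  shows "\<exists>!y. y \<in> X \<and> plim p x y"
proof -
  have ex: "\<exists>y\<in>X. plim p x y"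
  proof (rule ccontr)
    assume "\<not> ?thesis"
    then have "\<forall>y\<in>X. \<exists>V. open V \<and> y \<in> V \<and> {n. x n \<in> V} \<notin> p"
      unfolding plim_def by auto
    then obtain V where V0: "\<forall>y\<in>X. open (V y) \<and> y \<in> V y \<and> {n. x n \<in> V y} \<notin> p"
      by (rule bchoice[THEN exE])
    then have V: "\<And>y. y \<in> X \<Longrightarrow> open (V y) \<and> y \<in> V y \<and> {n. x n \<in> V y} \<notin> p"
      by simp
    obtain F where F: "F \<subseteq> X" "finite F" "X \<subseteq> (\<Union>y\<in>F. V y)"
    proof (rule compactE_image[OF assms(1), where C=X and f=V])
      show "open (V y)" if "y \<in> X" for y using V that by blast
      show "X \<subseteq> (\<Union>y\<in>X. V y)" using V by blast
    qed blast
    have "{n. x n \<in> (\<Union>y\<in>F. V y)} \<notin> p"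
    proof (rule fu_finite_union_notin[OF assms(3) F(2)])
      show "\<forall>y\<in>F. {n. x n \<in> V y} \<notin> p" using V F(1) by blast
    qed
    moreover have "{n. x n \<in> (\<Union>y\<in>F. V y)} = UNIV" using F(3) assms(2) by blast
    ultimately show False using fu_UNIV[OF assms(3)] by simp
  qed
  have un: "y1 = y2" if "plim p x y1" "plim p x y2" for y1 y2
  proof (rule ccontr)
    assume "y1 \<noteq> y2"
    then obtain U V where UV: "open U" "open V" "y1 \<in> U" "y2 \<in> V" "U \<inter> V = {}"
      using hausdorff[OF \<open>y1 \<noteq> y2\<close>] by blast
    have "{n. x n \<in> U} \<in> p" "{n. x n \<in> V} \<in> p" using that UV unfolding plim_def by auto
    then have "{n. x n \<in> U} \<inter> {n. x n \<in> V} \<in> p" using assms(3) unfolding free_ultrafilter_def by blast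
    moreover have "{n. x n \<in> U} \<inter> {n. x n \<in> V} = {}" using UV(5) by blast
    ultimately show False using assms(3) unfolding free_ultrafilter_def by simp
  qed
  show ?thesis using ex un by blast
qed

lemma funpow_period:
  assumes "(f ^^ m) b = b"
  shows "(f ^^ (q * m)) b = b"
proof (induction q)
  case 0 then show ?case by simp
next
  case (Suc q)
  have "(f ^^ (Suc q * m)) b = (f ^^ m) ((f ^^ (q * m)) b)"
    by (simp add: funpow_add add.commute)
  then show ?case using Suc assms by simp
qed

lemma funpow_mod:
  assumes "(f ^^ m) b = b"
  shows "(f ^^ i) b = (f ^^ (i mod m)) b"
proof -
  have "i = i mod m + (i div m) * m" by simp
  then have "(f ^^ i) b = (f ^^ (i mod m)) ((f ^^ ((i div m) * m)) b)"
    by (metis funpow_add o_apply)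
  then show ?thesis using funpow_period[OF assms] by simp
qed

lemma orbit_finite:
  assumes "(f ^^ m) b = b" "m \<ge> 1"
  shows "finite (orbit f b)"
proof -
  have "orbit f b \<subseteq> (\<lambda>j. (f ^^ j) b) ` {..<m}"
  proof
    fix x assume "x \<in> orbit f b"
    then obtain i where i: "x = (f ^^ i) b" unfolding orbit_def by blast
    then have "x = (f ^^ (i mod m)) b" using funpow_mod[OF assms(1)] by simp
    moreover have "i mod m < m" using assms(2) by simp
    ultimately show "x \<in> (\<lambda>j. (f ^^ j) b) ` {..<m}" by blast
  qed
  then show ?thesis by (rule finite_subset) simp
qed

lemma omega_eq_orbit:
  fixes f :: "'a::metric_space \<Rightarrow> 'a"
  assumes per: "(f ^^ m) b = b" "m \<ge> 1"
    and inf: "infinite {k. (f ^^ k) z = b}"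
  shows "omega_limit f z = orbit f b"
proof
  show "orbit f b \<subseteq> omega_limit f z"
  proof
    fix y assume "y \<in> orbit f b"
    then obtain j where j: "y = (f ^^ j) b" unfolding orbit_def by blast
    define S where "S = {k. (f ^^ k) z = b}"
    define r where "r = (\<lambda>k. enumerate S k + j)"
    have sm: "strict_mono (enumerate S)" using strict_mono_enumerate inf S_def by blast
    then have "strict_mono r" unfolding r_def strict_mono_def by simp
    moreover have "(f ^^ (r k)) z = y" for k
    proof -
      have "enumerate S k \<in> S" using enumerate_in_set inf S_def by blast
      then have "(f ^^ enumerate S k) z = b" unfolding S_def by simp
      then show ?thesis unfolding r_def j by (simp add: funpow_add add.commute)
    qed
    ultimately show "y \<in> omega_limit f z" unfolding omega_limit_def by auto
  qed
next
  show "omega_limit f z \<subseteq> orbit f b"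
  proof
    fix y assume "y \<in> omega_limit f z"
    then obtain r where r: "strict_mono r" "(\<lambda>k. (f ^^ (r k)) z) \<longlonglongrightarrow> y"
      unfolding omega_limit_def by blast
    obtain k0 where k0: "(f ^^ k0) z = b" using inf not_finite_existsD by blast
    have ev: "\<forall>\<^sub>F k in sequentially. (f ^^ (r k)) z \<in> orbit f b"
    proof (rule eventually_sequentiallyI[of k0])
      fix k assume "k0 \<le> k"
      then have "k0 \<le> r k" using r(1) seq_suble order_trans by blast
      then have "(f ^^ (r k)) z = (f ^^ (r k - k0)) ((f ^^ k0) z)"
        by (metis funpow_add le_add_diff_inverse2 o_apply)
      then show "(f ^^ (r k)) z \<in> orbit f b" using k0 unfolding orbit_def by auto
    qed
    have "closed (orbit f b)" using orbit_finite[OF per] finite_imp_closed by blast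
    then show "y \<in> orbit f b" using Lim_in_closed_set[OF _ ev _ r(2)] by simp
  qed
qed

theorem lemma3p4:
  fixes X :: "'a::metric_space set" and f :: "'a \<Rightarrow> 'a" and p :: "nat set set"
    and b :: 'a and a :: "nat \<Rightarrow> 'a"
  assumes "compact X" and "countable X"
    and "continuous_on X f" and "f ` X \<subseteq> X"
    and "\<And>x. x \<in> X \<Longrightarrow> x islimpt X \<Longrightarrow> periodic_point f x"
    and "free_ultrafilter p"
    and "b \<in> X" and "\<not> b islimpt X"
    and "\<And>n. a n \<in> X"
    and "(\<lambda>n. p_iterate X p f (a n)) \<longlonglongrightarrow> b"
  shows "periodic_point f b \<and>
         (\<forall>\<^sub>F n in sequentially. orbit f b = omega_limit f b \<and> omega_limit f b = omega_limit f (a n))"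
proof -
  have inX: "(f ^^ k) z \<in> X" if "z \<in> X" for k z
    using that assms(4) by (induction k) auto
  have pit: "p_iterate X p f z \<in> X \<and> plim p (\<lambda>k. (f ^^ k) z) (p_iterate X p f z)" if "z \<in> X" for z
    unfolding p_iterate_def
    by (rule theI'[OF plim_ex1[OF assms(1) _ assms(6)]]) (use inX that in auto)
  obtain T where T: "open T" "b \<in> T" "\<And>y. y \<in> X \<Longrightarrow> y \<in> T \<Longrightarrow> y = b"
    using assms(8) unfolding islimpt_def by blast
  have ev: "\<forall>\<^sub>F n in sequentially. infinite {k. (f ^^ k) (a n) = b}"
  proof -
    have "\<forall>\<^sub>F n in sequentially. p_iterate X p f (a n) \<in> T"
      using topological_tendstoD[OF assms(10) T(1,2)] .
    then show ?thesis
    proof (rule eventually_mono)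
      fix n assume "p_iterate X p f (a n) \<in> T"
      then have eq: "p_iterate X p f (a n) = b" using T(3) pit assms(9) by blast
      then have "plim p (\<lambda>k. (f ^^ k) (a n)) b" using pit assms(9) by metis
      then have "{k. (f ^^ k) (a n) \<in> T} \<in> p" using T unfolding plim_def by blast
      moreover have "{k. (f ^^ k) (a n) \<in> T} = {k. (f ^^ k) (a n) = b}"
        using T(2,3) inX assms(9) by blast
      ultimately have "{k. (f ^^ k) (a n) = b} \<in> p" by simp
      then show "infinite {k. (f ^^ k) (a n) = b}"
        using assms(6) unfolding free_ultrafilter_def by blast
    qed
  qed
  then obtain n0 where "infinite {k. (f ^^ k) (a n0) = b}"
    using eventually_sequentially by (metis order_refl)
  then obtain k1 k2 where k: "k1 < k2" "(f ^^ k1) (a n0) = b" "(f ^^ k2) (a n0) = b"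
  proof -
    assume H: "\<And>k1 k2. k1 < k2 \<Longrightarrow> (f ^^ k1) (a n0) = b \<Longrightarrow> (f ^^ k2) (a n0) = b \<Longrightarrow> thesis"
    obtain k1 where k1: "(f ^^ k1) (a n0) = b" using \<open>infinite _\<close> not_finite_existsD by blast
    obtain k2 where k2: "k2 > k1" "(f ^^ k2) (a n0) = b"
      using \<open>infinite _\<close> unfolding infinite_nat_iff_unbounded by blast
    show thesis using H[OF k2(1) k1 k2(2)] .
  qed
  define m where "m = k2 - k1"
  have m1: "m \<ge> 1" using k(1) m_def by simp
  have per: "(f ^^ m) b = b"
  proof -
    have "(f ^^ m) b = (f ^^ m) ((f ^^ k1) (a n0))" using k(2) by simp
    also have "\<dots> = (f ^^ (m + k1)) (a n0)" by (simp add: funpow_add)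
    also have "m + k1 = k2" using k(1) m_def by simp
    finally show ?thesis using k(3) by simp
  qed
  have infb: "infinite {k. (f ^^ k) b = b}"
    unfolding infinite_nat_iff_unbounded
  proof
    fix N
    have "(f ^^ (Suc N * m)) b = b" using funpow_period[OF per] .
    moreover have "Suc N * m > N"
    proof -
      have "Suc N * 1 \<le> Suc N * m" using m1 by (rule mult_le_mono2)
      then show ?thesis by simp
    qed
    ultimately show "\<exists>k>N. k \<in> {k. (f ^^ k) b = b}" by blast
  qed
  have "periodic_point f b" unfolding periodic_point_def using per m1 by blast
  moreover have "\<forall>\<^sub>F n in sequentially. orbit f b = omega_limit f b \<and> omega_limit f b = omega_limit f (a n)"
    using ev by (rule eventually_mono)
      (simp add: omega_eq_orbit[OF per m1 infb] omega_eq_orbit[OF per m1])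
  ultimately show ?thesis by blast
qed

end
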